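(* Let $U=f+g$ satisfy assumption (H1), assume that $g$ is Lipschitz, and assume $0<\int_{\mathbb{R}^d}e^{-U(x)}\,dx<\infty$. Let $\pi(x)=e^{-U(x)}/\int e^{-U}$ and, for $\lambda>0$, $\pi^\lambda(x)=e^{-U^\lambda(x)}/\int e^{-U^\lambda}$. Then for all $\lambda>0$, $$\|\pi^\lambda-\pi\|_{TV}\le\lambda\,\|g\|_{\mathrm{Lip}}^2 .$$
   Context: Assumption (H1): $U=f+g$ where $f:\mathbb{R}^d\to\mathbb{R}$ and $g:\mathbb{R}^d\to(-\infty,+\infty]$ are both bounded from below; $f$ is convex, continuously differentiable, and $\nabla f$ is $L_f$-Lipschitz; $g$ is proper, convex and lower semicontinuous. For $\lambda>0$, $g^\lambda(x)=\min_{y\in\mathbb{R}^d}\{g(y)+(2\lambda)^{-1}\|x-y\|^2\}$ and $U^\lambda=f+g^\lambda$. For a Lipschitz function $g$, $\|g\|_{\mathrm{Lip}}=\sup\{|g(x)-g(y)|/\|x-y\|: x\ne y\}$ is its smallest Lipschitz constant. $\|\mu-\nu\|_{TV}=\sup\{|\int h\,d\mu-\int h\,d\nu|: h\text{ Borel},\ \sup|h|\le1\}$, which for densities equals $\int|\mu(x)-\nu(x)|\,dx$. *)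

theory Defs
  imports "HOL-Analysis.Analysis"
begin

definition moreau_env :: "real \<Rightarrow> ('a::real_normed_vector \<Rightarrow> real) \<Rightarrow> 'a \<Rightarrow> real" where
  "moreau_env lam g x = (INF y. g y + (norm (x - y))\<^sup>2 / (2 * lam))"

definition lsc :: "('a::topological_space \<Rightarrow> real) \<Rightarrow> bool" where
  "lsc g \<longleftrightarrow> (\<forall>c. closed {x. g x \<le> c})"

definition lip_const :: "('a::metric_space \<Rightarrow> real) \<Rightarrow> real" where
  "lip_const g = (SUP p \<in> {(x, y). x \<noteq> y}. \<bar>g (fst p) - g (snd p)\<bar> / dist (fst p) (snd p))"

definition gibbs_density :: "('a::euclidean_space \<Rightarrow> real) \<Rightarrow> 'a \<Rightarrow> real" where
  "gibbs_density V x = exp (- V x) / (\<integral>z. exp (- V z) \<partial>lborel)"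

definition tv_dist :: "('a::euclidean_space \<Rightarrow> real) \<Rightarrow> ('a \<Rightarrow> real) \<Rightarrow> real" where
  "tv_dist p q = (\<integral>x. \<bar>p x - q x\<bar> \<partial>lborel)"

end

theory Submission
  imports Defs
begin

lemma lip_const_bound:
  fixes g :: "'a::euclidean_space \<Rightarrow> real"
  assumes "L-lipschitz_on UNIV g"
  shows "\<bar>g x - g y\<bar> \<le> lip_const g * dist x y" "0 \<le> lip_const g"
proof -
  let ?S = "(\<lambda>p. \<bar>g (fst p) - g (snd p)\<bar> / dist (fst p) (snd p)) ` {(x, y). x \<noteq> y}"
  have L: "\<bar>g x - g y\<bar> \<le> L * dist x y" for x y
    using assms unfolding lipschitz_on_def dist_real_def by auto
  have bdd: "bdd_above ?S"
  proof (rule bdd_aboveI)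
    fix t assume "t \<in> ?S"
    then obtain x y where xy: "x \<noteq> y" "t = \<bar>g x - g y\<bar> / dist x y" by auto
    then show "t \<le> L" using L[of x y] by (simp add: divide_le_eq)
  qed
  have up: "\<bar>g x - g y\<bar> / dist x y \<le> lip_const g" if "x \<noteq> y" for x y
    unfolding lip_const_def
    by (rule cSUP_upper2[OF bdd, of "(x,y)"]) (use that in auto)
  show "\<bar>g x - g y\<bar> \<le> lip_const g * dist x y"
  proof (cases "x = y")
    case False
    then show ?thesis using up[OF False] by (simp add: divide_le_eq mult.commute)
  qed simp
  obtain b :: 'a where "b \<in> Basis" using nonempty_Basis by blast
  hence "b \<noteq> 0" using nonzero_Basis by blast
  hence "(0::'a) \<noteq> b" by simp
  have "0 \<le> \<bar>g 0 - g b\<bar> / dist 0 b" by simp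
  also have "\<dots> \<le> lip_const g" using up[OF \<open>0 \<noteq> b\<close>] .
  finally show "0 \<le> lip_const g" .
qed

theorem proposition1:
  fixes f g :: "'a::euclidean_space \<Rightarrow> real" and Df :: "'a \<Rightarrow> 'a" and Lf lam :: real
  assumes f_bdd: "bdd_below (range f)"
    and f_convex: "convex_on UNIV f"
    and f_grad: "\<And>x. (f has_derivative (\<lambda>h. Df x \<bullet> h)) (at x)"
    and f_grad_lip: "\<And>x y. norm (Df x - Df y) \<le> Lf * norm (x - y)"
    and g_bdd: "bdd_below (range g)"
    and g_convex: "convex_on UNIV g"
    and g_lsc: "lsc g"
    and g_lip: "\<exists>L. L-lipschitz_on UNIV g"
    and int_fin: "integrable lborel (\<lambda>x. exp (- (f x + g x)))"
    and int_pos: "(\<integral>x. exp (- (f x + g x)) \<partial>lborel) > 0"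
    and lam_pos: "lam > 0"
  shows "tv_dist (gibbs_density (\<lambda>x. f x + moreau_env lam g x))
                 (gibbs_density (\<lambda>x. f x + g x))
         \<le> lam * (lip_const g)\<^sup>2"
proof -
  obtain L where gL: "L-lipschitz_on UNIV g" using g_lip by blast
  define L0 where "L0 = lip_const g"
  have gL0: "\<bar>g x - g y\<bar> \<le> L0 * dist x y" for x y
    unfolding L0_def by (rule lip_const_bound[OF gL])
  have L0pos: "0 \<le> L0" unfolding L0_def by (rule lip_const_bound[OF gL])
  define m where "m = moreau_env lam g"
  define c where "c = lam * L0\<^sup>2 / 2"
  obtain B where B: "\<And>x. B \<le> g x" using g_bdd unfolding bdd_below_def by auto
  have bddm: "bdd_below (range (\<lambda>y. g y + (norm (x - y))\<^sup>2 / (2 * lam)))" for x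
  proof (rule bdd_belowI[of _ B])
    fix t assume "t \<in> range (\<lambda>y. g y + (norm (x - y))\<^sup>2 / (2 * lam))"
    then obtain y where "t = g y + (norm (x - y))\<^sup>2 / (2 * lam)" by auto
    moreover have "0 \<le> (norm (x - y))\<^sup>2 / (2 * lam)" using lam_pos by simp
    ultimately show "B \<le> t" using B[of y] by linarith
  qed
  have m_le: "m x \<le> g x" for x
    unfolding m_def moreau_env_def
    by (rule cINF_lower2[OF bddm, of x]) auto
  have m_ge: "g x - c \<le> m x" for x
    unfolding m_def moreau_env_def
  proof (rule cINF_greatest)
    fix y
    define t where "t = norm (x - y)"
    have "g x - g y \<le> L0 * t" using gL0[of x y] by (simp add: t_def dist_norm)
    moreover have "0 \<le> (t - lam * L0)\<^sup>2 / (2 * lam)" using lam_pos by simp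
    moreover have "(t - lam * L0)\<^sup>2 / (2 * lam) = t\<^sup>2 / (2*lam) - L0 * t + c"
      using lam_pos unfolding c_def by (simp add: field_simps power2_eq_square)
    ultimately show "g x - c \<le> g y + (norm (x - y))\<^sup>2 / (2 * lam)"
      unfolding t_def[symmetric] by linarith
  qed auto
  have m_lip: "m x \<le> m x' + L0 * dist x x'" for x x'
  proof -
    have "m x - L0 * dist x x' \<le> m x'"
      unfolding m_def moreau_env_def
    proof (rule cINF_greatest)
      fix y
      have "(INF y. g y + (norm (x - y))\<^sup>2 / (2 * lam)) \<le> g (y + (x - x')) + (norm (x - (y + (x - x'))))\<^sup>2 / (2 * lam)"
        by (rule cINF_lower[OF bddm]) auto
      also have "norm (x - (y + (x - x'))) = norm (x' - y)" by (simp add: algebra_simps)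
      also have "g (y + (x - x')) \<le> g y + L0 * dist x x'"
        using gL0[of "y + (x - x')" y] by (simp add: dist_norm)
      finally show "(INF y. g y + (norm (x - y))\<^sup>2 / (2 * lam)) - L0 * dist x x'
          \<le> g y + (norm (x' - y))\<^sup>2 / (2 * lam)" by linarith
    qed auto
    thus ?thesis by linarith
  qed
  have m_cont: "continuous_on UNIV m"
  proof -
    have "L0-lipschitz_on UNIV m"
      unfolding lipschitz_on_def dist_real_def
    proof (intro conjI ballI L0pos)
      fix x y :: 'a
      have "m x \<le> m y + L0 * dist x y" by (rule m_lip)
      moreover have "m y \<le> m x + L0 * dist x y" using m_lip[of y x] by (simp add: dist_commute)
      ultimately show "\<bar>m x - m y\<bar> \<le> L0 * dist x y" by linarith
    qed
    thus ?thesis by (rule lipschitz_on_continuous_on)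
  qed
  have f_cont: "continuous_on UNIV f"
    using f_grad has_derivative_continuous continuous_at_imp_continuous_on by blast
  have g_cont: "continuous_on UNIV g"
    using gL by (rule lipschitz_on_continuous_on)
  define a where "a x = exp (- (f x + g x))" for x
  define b where "b x = exp (- (f x + m x))" for x
  have a_meas: "a \<in> borel_measurable lborel"
  proof -
    have "continuous_on UNIV a" unfolding a_def by (intro continuous_intros f_cont g_cont)
    thus ?thesis unfolding measurable_lborel2 by (rule borel_measurable_continuous_onI)
  qed
  have b_meas: "b \<in> borel_measurable lborel"
  proof -
    have "continuous_on UNIV b" unfolding b_def by (intro continuous_intros f_cont m_cont)
    thus ?thesis unfolding measurable_lborel2 by (rule borel_measurable_continuous_onI)
  qed
  have ab: "a x \<le> b x" for x unfolding a_def b_def using m_le[of x] by simp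
  have ba: "b x \<le> exp c * a x" for x
  proof -
    have "-(f x + m x) \<le> c + - (f x + g x)" using m_ge[of x] by linarith
    hence "b x \<le> exp (c + - (f x + g x))" unfolding b_def by simp
    thus ?thesis unfolding a_def exp_add .
  qed
  have a_int: "integrable lborel a" using int_fin unfolding a_def .
  have b_int: "integrable lborel b"
  proof (rule Bochner_Integration.integrable_bound[OF integrable_mult_right[OF a_int, of "exp c"] b_meas])
    have "norm (b x) \<le> norm (exp c * a x)" for x
    proof -
      have "norm (b x) = b x" unfolding b_def by simp
      also have "\<dots> \<le> exp c * a x" by (rule ba)
      also have "\<dots> = norm (exp c * a x)" unfolding a_def by simp
      finally show ?thesis .
    qed
    thus "AE x in lborel. norm (b x) \<le> norm (exp c * a x)" by (intro AE_I2)
  qed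
  define Z where "Z = integral\<^sup>L lborel a"
  define Zb where "Zb = integral\<^sup>L lborel b"
  have Zpos: "Z > 0" using int_pos unfolding Z_def a_def .
  have ZZb: "Z \<le> Zb" unfolding Z_def Zb_def by (rule integral_mono[OF a_int b_int ab])
  have ZbZ: "Zb \<le> exp c * Z" unfolding Z_def Zb_def
  proof -
    have "integral\<^sup>L lborel b \<le> integral\<^sup>L lborel (\<lambda>x. exp c * a x)"
      by (rule integral_mono[OF b_int integrable_mult_right[OF a_int] ba])
    thus "integral\<^sup>L lborel b \<le> exp c * integral\<^sup>L lborel a" by simp
  qed
  have Zbpos: "Zb > 0" using Zpos ZZb by linarith
  define p where "p x = b x / Zb" for x
  define q where "q x = a x / Z" for x
  have gp: "gibbs_density (\<lambda>x. f x + moreau_env lam g x) = p"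
    unfolding gibbs_density_def p_def b_def Zb_def m_def by auto
  have gq: "gibbs_density (\<lambda>x. f x + g x) = q"
    unfolding gibbs_density_def q_def a_def Z_def by auto
  have p_int: "integrable lborel p" unfolding p_def using b_int by simp
  have q_int: "integrable lborel q" unfolding q_def using a_int by simp
  have ip: "integral\<^sup>L lborel p = 1" unfolding p_def Zb_def using Zbpos by (simp add: Zb_def[symmetric])
  have iq: "integral\<^sup>L lborel q = 1" unfolding q_def Z_def using Zpos by (simp add: Z_def[symmetric])
  define k where "k = 1 / Z - 1 / Zb"
  have kpos: "0 \<le> k" unfolding k_def using Zpos ZZb by (simp add: frac_le)
  have pw: "\<bar>p x - q x\<bar> \<le> (p x - q x) + 2 * (k * a x)" for x
  proof -
    have a0: "0 \<le> a x" unfolding a_def by simp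
    have "q x - p x \<le> a x / Z - a x / Zb"
      unfolding p_def q_def using ab[of x] Zbpos by (simp add: divide_right_mono)
    also have "\<dots> = k * a x" unfolding k_def by (simp add: field_simps)
    finally have "q x - p x \<le> k * a x" .
    moreover have "0 \<le> k * a x" using kpos a0 by simp
    ultimately show ?thesis by linarith
  qed
  have "tv_dist p q \<le> integral\<^sup>L lborel (\<lambda>x. (p x - q x) + 2 * (k * a x))"
    unfolding tv_dist_def
  proof (rule integral_mono)
    show "integrable lborel (\<lambda>x. \<bar>p x - q x\<bar>)"
      by (intro integrable_abs Bochner_Integration.integrable_diff p_int q_int)
    show "integrable lborel (\<lambda>x. (p x - q x) + 2 * (k * a x))"
      by (intro Bochner_Integration.integrable_add Bochner_Integration.integrable_diff p_int q_int
          integrable_mult_right a_int)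
    show "\<And>x. x \<in> space lborel \<Longrightarrow> \<bar>p x - q x\<bar> \<le> (p x - q x) + 2 * (k * a x)"
      by (rule pw)
  qed
  also have "\<dots> = 2 * (k * Z)"
  proof -
    have "integral\<^sup>L lborel (\<lambda>x. (p x - q x) + 2 * (k * a x))
        = integral\<^sup>L lborel (\<lambda>x. p x - q x) + integral\<^sup>L lborel (\<lambda>x. 2 * (k * a x))"
      by (intro Bochner_Integration.integral_add Bochner_Integration.integrable_diff p_int q_int
          integrable_mult_right a_int)
    also have "integral\<^sup>L lborel (\<lambda>x. p x - q x) = 0"
      using Bochner_Integration.integral_diff[OF p_int q_int] ip iq by simp
    also have "integral\<^sup>L lborel (\<lambda>x. 2 * (k * a x)) = 2 * (k * Z)"
      unfolding Z_def by simp
    finally show ?thesis by simp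
  qed
  also have "k * Z = 1 - Z / Zb" unfolding k_def using Zpos by (simp add: field_simps)
  also have "1 - Z / Zb \<le> c"
  proof -
    have "exp (-c) \<le> Z / Zb" using ZbZ Zbpos Zpos
      by (simp add: exp_minus field_simps)
    moreover have "1 + (-c) \<le> exp (-c)" by (rule exp_ge_add_one_self)
    ultimately show ?thesis by linarith
  qed
  finally show ?thesis unfolding gp gq c_def L0_def by simp
qed

end
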